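(* Let $F$ be a quantifier-free formula and let $\mathbf c$ be a finite set of object constants containing every object constant occurring in $F$. Then the formula $(F\land\mathit{in}_{\mathbf c}(\mathrm{NS}(F)))\rightarrow F^*(\mathbf e_{\mathbf c})$ is logically valid.
   Context: Formulas are first-order formulas with object constants, predicate constants and equality but no function constants of arity $>0$; primitive connectives are $\bot,\land,\lor,\rightarrow$ ($\neg F$ is $F\rightarrow\bot$, $\top$ is $\bot\rightarrow\bot$). Let $\mathbf p=p_1,\dots,p_n$ be the predicate constants occurring in $F$ and $\mathbf u=u_1,\dots,u_n$ predicate variables of matching arities. $F^*(\mathbf u)$ is defined recursively: $p_i(\mathbf t)^*=u_i(\mathbf t)$; $(t_1=t_2)^*=(t_1=t_2)$; $\bot^*=\bot$; $(G\land H)^*=G^*\land H^*$; $(G\lor H)^*=G^*\lor H^*$; $(G\rightarrow H)^*=(G^*\rightarrow H^* )\land(G\rightarrow H)$; $(\forall xG)^*=\forall xG^*$; $(\exists xG)^*=\exists xG^*$. For a finite set $\mathbf c$ of object constants, $\mathit{in}_{\mathbf c}(x_1,\dots,x_m)$ denotes $\bigwedge_{1\le j\le m}\bigvee_{c\in\mathbf c}x_j=c$; for a finite set $V$ of variables, $\mathit{in}_{\mathbf c}(V)$ denotes $\mathit{in}_{\mathbf c}$ applied to the variables of $V$ (the empty conjunction being $\top$). $\mathbf e_{\mathbf c}$ denotes the list of predicate expressions $\lambda\mathbf x(p_i(\mathbf x)\land\mathit{in}_{\mathbf c}(\mathbf x))$, and $F^*(\mathbf e_{\mathbf c})$ is the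 result of replacing each atomic part $u_i(\mathbf t)$ of $F^*(\mathbf u)$ by $p_i(\mathbf t)\land\mathit{in}_{\mathbf c}(\mathbf t)$. Restricted variables: $\mathrm{RV}(G)$ for quantifier-free $G$: if $G$ is an equality between two variables, $\mathrm{RV}(G)=\emptyset$; if $G$ is any other atomic formula, $\mathrm{RV}(G)$ is the set of variables occurring in $G$; $\mathrm{RV}(\bot)=\emptyset$; $\mathrm{RV}(G\land H)=\mathrm{RV}(G)\cup\mathrm{RV}(H)$; $\mathrm{RV}(G\lor H)=\mathrm{RV}(G)\cap\mathrm{RV}(H)$; $\mathrm{RV}(G\rightarrow H)=\emptyset$. An occurrence of a variable in a formula is strictly positive if it is not in the antecedent of any implication. A variable $x$ occurring in a quantifier-free formula $F$ is semi-safe in $F$ if every strictly positive occurrence of $x$ in $F$ belongs to a subformula $G\rightarrow H$ of $F$ with $x\in\mathrm{RV}(G)$. $\mathrm{NS}(F)$ is the set of variables of $F$ that are not semi-safe in $F$. *)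

theory Defs
  imports Main
begin

text \<open>First-order syntax: object variables and object constants are named by
  natural numbers, predicate constants by natural numbers; there are no
  function constants of positive arity.\<close>

datatype trm = Var nat | Cst nat

datatype form =
    Atom nat "trm list"
  | Eq trm trm
  | Bot
  | And form form
  | Or form form
  | Imp form form
  | All nat form
  | Ex nat form

definition Neg :: "form \<Rightarrow> form" where "Neg F = Imp F Bot"
definition Top :: form where "Top = Imp Bot Bot"

fun tvars :: "trm \<Rightarrow> nat set" where
  "tvars (Var x) = {x}" | "tvars (Cst c) = {}"

fun tconsts :: "trm \<Rightarrow> nat set" where
  "tconsts (Var x) = {}" | "tconsts (Cst c) = {c}"

fun qfree :: "form \<Rightarrow> bool" where
  "qfree (Atom p ts) = True"
| "qfree (Eq s t) = True"
| "qfree Bot = True"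
| "qfree (And F G) = (qfree F \<and> qfree G)"
| "qfree (Or F G) = (qfree F \<and> qfree G)"
| "qfree (Imp F G) = (qfree F \<and> qfree G)"
| "qfree (All x F) = False"
| "qfree (Ex x F) = False"

fun vars :: "form \<Rightarrow> nat set" where
  "vars (Atom p ts) = (\<Union>t\<in>set ts. tvars t)"
| "vars (Eq s t) = tvars s \<union> tvars t"
| "vars Bot = {}"
| "vars (And F G) = vars F \<union> vars G"
| "vars (Or F G) = vars F \<union> vars G"
| "vars (Imp F G) = vars F \<union> vars G"
| "vars (All x F) = insert x (vars F)"
| "vars (Ex x F) = insert x (vars F)"

fun oconsts :: "form \<Rightarrow> nat set" where
  "oconsts (Atom p ts) = (\<Union>t\<in>set ts. tconsts t)"
| "oconsts (Eq s t) = tconsts s \<union> tconsts t"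
| "oconsts Bot = {}"
| "oconsts (And F G) = oconsts F \<union> oconsts G"
| "oconsts (Or F G) = oconsts F \<union> oconsts G"
| "oconsts (Imp F G) = oconsts F \<union> oconsts G"
| "oconsts (All x F) = oconsts F"
| "oconsts (Ex x F) = oconsts F"

text \<open>Semantics: the universe is the (nonempty) type 'a; an interpretation
  assigns elements to object constants and relations to predicate constants.\<close>
record 'a interp =
  cst :: "nat \<Rightarrow> 'a"
  prd :: "nat \<Rightarrow> 'a list \<Rightarrow> bool"

fun teval :: "'a interp \<Rightarrow> (nat \<Rightarrow> 'a) \<Rightarrow> trm \<Rightarrow> 'a" where
  "teval I s (Var x) = s x"
| "teval I s (Cst c) = cst I c"

fun sat :: "'a interp \<Rightarrow> (nat \<Rightarrow> 'a) \<Rightarrow> form \<Rightarrow> bool" where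
  "sat I s (Atom p ts) = prd I p (map (teval I s) ts)"
| "sat I s (Eq t u) = (teval I s t = teval I s u)"
| "sat I s Bot = False"
| "sat I s (And F G) = (sat I s F \<and> sat I s G)"
| "sat I s (Or F G) = (sat I s F \<or> sat I s G)"
| "sat I s (Imp F G) = (sat I s F \<longrightarrow> sat I s G)"
| "sat I s (All x F) = (\<forall>a. sat I (s(x := a)) F)"
| "sat I s (Ex x F) = (\<exists>a. sat I (s(x := a)) F)"

text \<open>Logical validity: true in every interpretation (over every universe,
  the universe being the type variable 'a, which is universally quantified in
  any theorem) under every assignment.\<close>
definition valid :: "'a itself \<Rightarrow> form \<Rightarrow> bool" where
  "valid _ F \<longleftrightarrow> (\<forall>(I::'a interp) s. sat I s F)"

fun BigAnd :: "form list \<Rightarrow> form" where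
  "BigAnd [] = Top" | "BigAnd (F # Fs) = And F (BigAnd Fs)"
fun BigOr :: "form list \<Rightarrow> form" where
  "BigOr [] = Bot" | "BigOr (F # Fs) = Or F (BigOr Fs)"

definition in_c :: "nat set \<Rightarrow> trm list \<Rightarrow> form" where
  "in_c c ts = BigAnd (map (\<lambda>t. BigOr (map (\<lambda>d. Eq t (Cst d)) (sorted_list_of_set c))) ts)"

definition in_c_vars :: "nat set \<Rightarrow> nat set \<Rightarrow> form" where
  "in_c_vars c V = in_c c (map Var (sorted_list_of_set V))"

text \<open>F^*(u) with the predicate variables u already replaced by predicate
  expressions: R p ts is the formula substituted for the atom u_p(ts).\<close>
fun star :: "(nat \<Rightarrow> trm list \<Rightarrow> form) \<Rightarrow> form \<Rightarrow> form" where
  "star R (Atom p ts) = R p ts"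
| "star R (Eq s t) = Eq s t"
| "star R Bot = Bot"
| "star R (And F G) = And (star R F) (star R G)"
| "star R (Or F G) = Or (star R F) (star R G)"
| "star R (Imp F G) = And (Imp (star R F) (star R G)) (Imp F G)"
| "star R (All x F) = All x (star R F)"
| "star R (Ex x F) = Ex x (star R F)"

definition e_c :: "nat set \<Rightarrow> nat \<Rightarrow> trm list \<Rightarrow> form" where
  "e_c c p ts = And (Atom p ts) (in_c c ts)"

text \<open>Restricted variables (only meaningful for quantifier-free formulas).\<close>
fun RV :: "form \<Rightarrow> nat set" where
  "RV (Atom p ts) = (\<Union>t\<in>set ts. tvars t)"
| "RV (Eq s t) = (case (s, t) of (Var _, Var _) \<Rightarrow> {} | _ \<Rightarrow> tvars s \<union> tvars t)"
| "RV Bot = {}"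
| "RV (And F G) = RV F \<union> RV G"
| "RV (Or F G) = RV F \<inter> RV G"
| "RV (Imp F G) = {}"
| "RV (All x F) = {}"
| "RV (Ex x F) = {}"

text \<open>covered x F: every strictly positive occurrence of x in F belongs to a
  subformula G \<longrightarrow> H of F with x \<in> RV(G).\<close>
fun covered :: "nat \<Rightarrow> form \<Rightarrow> bool" where
  "covered x (Atom p ts) = (x \<notin> (\<Union>t\<in>set ts. tvars t))"
| "covered x (Eq s t) = (x \<notin> tvars s \<union> tvars t)"
| "covered x Bot = True"
| "covered x (And F G) = (covered x F \<and> covered x G)"
| "covered x (Or F G) = (covered x F \<and> covered x G)"
| "covered x (Imp G H) = (x \<in> RV G \<or> covered x H)"
| "covered x (All y F) = covered x F"
| "covered x (Ex y F) = covered x F"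

definition semi_safe :: "nat \<Rightarrow> form \<Rightarrow> bool" where
  "semi_safe x F \<longleftrightarrow> x \<in> vars F \<and> covered x F"

definition NS :: "form \<Rightarrow> nat set" where
  "NS F = {x \<in> vars F. \<not> semi_safe x F}"

end

theory Submission
  imports Defs
begin

lemma fin_tvars[simp]: "finite (tvars t)" by (cases t) auto

lemma sat_BigAnd: "sat I s (BigAnd fs) = (\<forall>f\<in>set fs. sat I s f)"
  by (induction fs) (auto simp: Top_def)

lemma sat_BigOr: "sat I s (BigOr fs) = (\<exists>f\<in>set fs. sat I s f)"
  by (induction fs) auto

lemma sat_in_c: "finite c \<Longrightarrow>
  sat I s (in_c c ts) = (\<forall>t\<in>set ts. \<exists>d\<in>c. teval I s t = cst I d)"
  by (simp add: in_c_def sat_BigAnd sat_BigOr)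

lemma star_sat: "qfree G \<Longrightarrow> sat I s (star (e_c c) G) \<Longrightarrow> sat I s G"
  by (induction G) (auto simp: e_c_def)

lemma RV_inc: "qfree G \<Longrightarrow> finite c \<Longrightarrow> oconsts G \<subseteq> c \<Longrightarrow>
  sat I s (star (e_c c) G) \<Longrightarrow> x \<in> RV G \<Longrightarrow> \<exists>d\<in>c. s x = cst I d"
proof (induction G)
  case (Atom p ts)
  then obtain t where "t \<in> set ts" "x \<in> tvars t" by auto
  moreover from \<open>x \<in> tvars t\<close> have "t = Var x" by (cases t) auto
  ultimately have "Var x \<in> set ts" by simp
  then show ?case using Atom by (force simp: e_c_def sat_in_c)
next
  case (Eq t u)
  then show ?case
    by (cases t; cases u) (auto, metis)
qed auto

lemma main: "qfree G \<Longrightarrow> finite c \<Longrightarrow> oconsts G \<subseteq> c \<Longrightarrow> sat I s G \<Longrightarrow>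
  (\<forall>x\<in>vars G. \<not> covered x G \<longrightarrow> (\<exists>d\<in>c. s x = cst I d)) \<Longrightarrow> sat I s (star (e_c c) G)"
proof (induction G)
  case (Atom p ts)
  have "\<exists>d\<in>c. teval I s t = cst I d" if "t \<in> set ts" for t
  proof (cases t)
    case (Var x)
    then show ?thesis using Atom that by force
  next
    case (Cst d)
    then show ?thesis using Atom that by force
  qed
  then show ?case using Atom by (simp add: e_c_def sat_in_c)
next
  case (Imp G H)
  show ?case
  proof (simp, intro conjI impI)
    assume sG: "sat I s (star (e_c c) G)"
    have "sat I s G" using Imp.prems star_sat[of G I s c] sG by simp
    then have "sat I s H" using Imp by simp
    moreover have "\<forall>x\<in>vars H. \<not> covered x H \<longrightarrow> (\<exists>d\<in>c. s x = cst I d)"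
    proof (intro ballI impI)
      fix x assume "x \<in> vars H" "\<not> covered x H"
      show "\<exists>d\<in>c. s x = cst I d"
      proof (cases "x \<in> RV G")
        case True then show ?thesis using RV_inc[OF _ _ _ sG] Imp by auto
      next
        case False then show ?thesis using Imp.prems \<open>x \<in> vars H\<close> \<open>\<not> covered x H\<close> by auto
      qed
    qed
    ultimately show "sat I s (star (e_c c) H)" using Imp by auto
  next
    assume "sat I s G" then show "sat I s H" using Imp by simp
  qed
qed auto

theorem lemma3:
  fixes F :: form and c :: "nat set"
  assumes "qfree F"
    and "finite c"
    and "oconsts F \<subseteq> c"
  shows "valid TYPE('a) (Imp (And F (in_c_vars c (NS F))) (star (e_c c) F))"
  unfolding valid_def
proof (intro allI, simp, intro impI, elim conjE)
  fix I :: "'a interp" and s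
  assume sF: "sat I s F" and inc: "sat I s (in_c_vars c (NS F))"
  have fin: "finite (NS F)"
  proof -
    have "finite (vars G)" for G by (induction G) auto
    then show ?thesis unfolding NS_def by auto
  qed
  have "\<forall>x\<in>NS F. \<exists>d\<in>c. s x = cst I d"
    using inc fin assms(2) by (simp add: in_c_vars_def sat_in_c)
  then have "\<forall>x\<in>vars F. \<not> covered x F \<longrightarrow> (\<exists>d\<in>c. s x = cst I d)"
    by (auto simp: NS_def semi_safe_def)
  then show "sat I s (star (e_c c) F)" using main assms sF by blast
qed

end
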